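(* Let $\alpha>0$ and let $P$ be a probability measure on $\mathbb{S}^{d-1}\times\mathbb{R}^d$ belonging to $\mathcal{M}_\alpha$, and let $P^*$ be its adjoint measure. Then: (i) $P^*$ is a probability measure and the marginal distributions induced by $P$ and $P^*$ on $\mathbb{S}^{d-1}$ coincide; (ii) for every measurable $f:\mathbb{S}^{d-1}\times(\mathbb{R}^d\setminus\{0\})\to\mathbb{R}$, $$\int_{\mathbb{S}^{d-1}\times(\mathbb{R}^d\setminus\{0\})}f(s^*,m^* )\,P^*(ds^*,dm^* )=\int_{\mathbb{S}^{d-1}\times(\mathbb{R}^d\setminus\{0\})}f(m/\|m\|,s/\|m\|)\,\|m\|^\alpha\,P(ds,dm),$$ in the sense that if one integral exists then so does the other and they are equal; (iii) $P^*\in\mathcal{M}_\alpha$; (iv) $(P^* )^*=P$.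
   Context: $\|\cdot\|$ is the Euclidean norm and $\mathbb{S}^{d-1}$ the unit sphere in $\mathbb{R}^d$. $\mathcal{M}_\alpha$ is the set of probability measures $P$ on $\mathbb{S}^{d-1}\times\mathbb{R}^d$ such that $\int_{\mathbb{S}^{d-1}\times(\mathbb{R}^d\setminus\{0\})}\mathbf{1}_S(m/\|m\|)\|m\|^\alpha P(ds,dm)\le P(S\times\mathbb{R}^d)$ for every Borel $S\subset\mathbb{S}^{d-1}$. For $P\in\mathcal{M}_\alpha$, the adjoint $P^*$ is the (a priori signed) Borel measure on $\mathbb{S}^{d-1}\times\mathbb{R}^d$ defined by $P^*(S\times\{0\})=P(S\times\mathbb{R}^d)-\int_{\mathbb{S}^{d-1}\times(\mathbb{R}^d\setminus\{0\})}\mathbf{1}_S(m/\|m\|)\|m\|^\alpha P(ds,dm)$ for Borel $S\subset\mathbb{S}^{d-1}$, and $P^*(E)=\int_{\mathbb{S}^{d-1}\times(\mathbb{R}^d\setminus\{0\})}\mathbf{1}_E(m/\|m\|,s/\|m\|)\|m\|^\alpha P(ds,dm)$ for Borel $E\subset\mathbb{S}^{d-1}\times(\mathbb{R}^d\setminus\{0\})$. *)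

theory Defs
  imports "HOL-Probability.Probability"
begin

abbreviation Sph :: "'a::euclidean_space set" where
  "Sph \<equiv> sphere 0 1"

definition Omega :: "('a::euclidean_space \<times> 'a) set" where
  "Omega = Sph \<times> UNIV"

definition Omega_nz :: "('a::euclidean_space \<times> 'a) set" where
  "Omega_nz = Sph \<times> (UNIV - {0})"

definition Omega_borel :: "('a::euclidean_space \<times> 'a) measure" where
  "Omega_borel = restrict_space borel Omega"

definition Sph_borel :: "'a::euclidean_space measure" where
  "Sph_borel = restrict_space borel Sph"

definition wt :: "real \<Rightarrow> ('a::euclidean_space \<times> 'a) \<Rightarrow> ennreal" where
  "wt \<alpha> x = indicator {y. snd y \<noteq> 0} x * ennreal (norm (snd x) powr \<alpha>)"

definition M_alpha :: "real \<Rightarrow> ('a::euclidean_space \<times> 'a) measure set" where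
  "M_alpha \<alpha> = {P. prob_space P \<and> sets P = sets Omega_borel \<and>
     (\<forall>S. S \<in> sets borel \<longrightarrow> S \<subseteq> Sph \<longrightarrow>
        (\<integral>\<^sup>+ x. indicator S (snd x /\<^sub>R norm (snd x)) * wt \<alpha> x \<partial>P) \<le> emeasure P (S \<times> UNIV))}"

text \<open>The (a priori signed) adjoint set function, on Borel sets E of S^{d-1} x R^d:
  P*(E) = P*(E \<inter> S\<times>{0}) + P*(E \<inter> S\<times>(R^d - {0})), with both parts given by the paper's formulas.
  (The image point (m/||m||, s/||m||) always lies in S\<times>(R^d-{0}).)\<close>
definition adjoint_fun :: "real \<Rightarrow> ('a::euclidean_space \<times> 'a) measure \<Rightarrow> ('a \<times> 'a) set \<Rightarrow> real" where
  "adjoint_fun \<alpha> P E =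
     (let S0 = {s. s \<in> Sph \<and> (s, 0) \<in> E} in
       measure P (S0 \<times> UNIV)
       - enn2real (\<integral>\<^sup>+ x. indicator S0 (snd x /\<^sub>R norm (snd x)) * wt \<alpha> x \<partial>P)
       + enn2real (\<integral>\<^sup>+ x. indicator E (snd x /\<^sub>R norm (snd x), fst x /\<^sub>R norm (snd x)) * wt \<alpha> x \<partial>P))"

text \<open>The adjoint as a measure object (agrees with adjoint_fun whenever the latter is nonnegative,
  which the theorem asserts in part (i)).\<close>
definition adjoint :: "real \<Rightarrow> ('a::euclidean_space \<times> 'a) measure \<Rightarrow> ('a \<times> 'a) measure" where
  "adjoint \<alpha> P = measure_of Omega (sets Omega_borel) (\<lambda>E. ennreal (adjoint_fun \<alpha> P E))"

end

theory Submission
  imports Defs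
begin



definition addm :: "'b measure \<Rightarrow> 'b measure \<Rightarrow> 'b measure" where
  "addm M N = measure_of (space M) (sets M) (\<lambda>A. emeasure M A + emeasure N A)"

lemma space_addm[simp]: "space (addm M N) = space M" and sets_addm[simp]: "sets (addm M N) = sets M"
  by (auto simp: addm_def)

lemma emeasure_addm:
  assumes "sets N = sets M" "A \<in> sets M"
  shows "emeasure (addm M N) A = emeasure M A + emeasure N A"
  unfolding addm_def
proof (rule emeasure_measure_of_sigma)
  show "sigma_algebra (space M) (sets M)" ..
  show "positive (sets M) (\<lambda>A. emeasure M A + emeasure N A)"
    by (simp add: positive_def)
  show "countably_additive (sets M) (\<lambda>A. emeasure M A + emeasure N A)"
  proof (rule countably_additiveI)
    fix A :: "nat \<Rightarrow> _"  assume A: "range A \<subseteq> sets M" and "disjoint_family A"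
    then show "(\<Sum>i. emeasure M (A i) + emeasure N (A i)) = emeasure M (\<Union>i. A i) + emeasure N (\<Union>i. A i)"
      using assms by (simp add: suminf_add[symmetric] suminf_emeasure)
  qed
qed (use assms in auto)

lemma nn_integral_addm:
  assumes "sets N = sets M" "f \<in> borel_measurable M"
  shows "(\<integral>\<^sup>+x. f x \<partial>addm M N) = (\<integral>\<^sup>+x. f x \<partial>M) + (\<integral>\<^sup>+x. f x \<partial>N)"
  using assms(2)
proof (induct rule: borel_measurable_induct)
  case (cong f g)
  have "space N = space M" using assms(1) by (rule sets_eq_imp_space_eq)
  then show ?case using cong
    by (metis (no_types, lifting) nn_integral_cong space_addm)
next
  case (set A)
  then show ?case using assms by (simp add: emeasure_addm)
next
  case (mult u c)
  have m: "u \<in> borel_measurable (addm M N)" "u \<in> borel_measurable N"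
    using mult assms(1) by (auto cong: measurable_cong_sets)
  then show ?case using mult
    by (simp add: nn_integral_cmult distrib_left)
next
  case (add u v)
  have m: "u \<in> borel_measurable (addm M N)" "u \<in> borel_measurable N"
          "v \<in> borel_measurable (addm M N)" "v \<in> borel_measurable N"
    using add assms(1) by (auto cong: measurable_cong_sets)
  then show ?case using add
    by (simp add: nn_integral_add ac_simps)
next
  case (seq U)
  have m: "\<And>i. U i \<in> borel_measurable (addm M N)" "\<And>i. U i \<in> borel_measurable N"
    using seq assms(1) by (auto cong: measurable_cong_sets)
  have "(\<integral>\<^sup>+x. (SUP i. U i) x \<partial>addm M N) = (SUP i. \<integral>\<^sup>+x. U i x \<partial>addm M N)"
    unfolding SUP_apply using m seq by (intro nn_integral_monotone_convergence_SUP) auto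
  also have "\<dots> = (SUP i. (\<integral>\<^sup>+x. U i x \<partial>M) + (\<integral>\<^sup>+x. U i x \<partial>N))"
    using seq by simp
  also have "\<dots> = (SUP i. \<integral>\<^sup>+x. U i x \<partial>M) + (SUP i. \<integral>\<^sup>+x. U i x \<partial>N)"
    by (rule ennreal_SUP_add) (use seq m in \<open>auto intro!: nn_integral_mono simp: incseq_def le_fun_def\<close>)
  also have "\<dots> = (\<integral>\<^sup>+x. (SUP i. U i) x \<partial>M) + (\<integral>\<^sup>+x. (SUP i. U i) x \<partial>N)"
    unfolding SUP_apply using m seq by (simp add: nn_integral_monotone_convergence_SUP)
  finally show ?case .
qed




definition s0 :: "'a::euclidean_space" where "s0 = (SOME b. b \<in> Basis)"

lemma s0_Sph: "(s0::'a::euclidean_space) \<in> Sph"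
proof -
  have "(SOME b. b \<in> (Basis::'a set)) \<in> Basis" by (rule someI_ex) (use nonempty_Basis in blast)
  then show ?thesis by (simp add: s0_def)
qed

definition Tf :: "('a::euclidean_space \<times> 'a) \<Rightarrow> 'a \<times> 'a" where
  "Tf x = (snd x /\<^sub>R norm (snd x), fst x /\<^sub>R norm (snd x))"

definition Tm :: "('a::euclidean_space \<times> 'a) \<Rightarrow> 'a \<times> 'a" where
  "Tm x = (if snd x = 0 then (s0, 0) else Tf x)"

definition Nm :: "('a::euclidean_space \<times> 'a) \<Rightarrow> 'a" where
  "Nm x = (if snd x = 0 then s0 else snd x /\<^sub>R norm (snd x))"

lemma nrm_Sph[simp]: "(b::'a::euclidean_space) \<noteq> 0 \<Longrightarrow> b /\<^sub>R norm b \<in> Sph"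
  by simp

lemma fst_borel[measurable]: "fst \<in> borel_measurable (borel :: ('a::euclidean_space \<times> 'b::euclidean_space) measure)"
  by (intro borel_measurable_continuous_onI continuous_intros)

lemma snd_borel[measurable]: "snd \<in> borel_measurable (borel :: ('a::euclidean_space \<times> 'b::euclidean_space) measure)"
  by (intro borel_measurable_continuous_onI continuous_intros)

lemma Omega_borel[measurable]: "(Omega :: ('a::euclidean_space \<times> 'a) set) \<in> sets borel"
  unfolding Omega_def by (intro borel_closed closed_Times) auto

lemma Omega_nz_borel[measurable]: "(Omega_nz :: ('a::euclidean_space \<times> 'a) set) \<in> sets borel"
proof -
  have "(Omega_nz :: ('a \<times> 'a) set) = Omega \<inter> {x. snd x \<noteq> 0}"
    by (auto simp: Omega_def Omega_nz_def)
  also have "\<dots> \<in> sets borel" by measurable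
  finally show ?thesis .
qed

lemma space_Omega_borel[simp]: "space Omega_borel = Omega"
  by (simp add: Omega_borel_def space_restrict_space)

lemma sets_Omega_borel_iff: "E \<in> sets Omega_borel \<longleftrightarrow> E \<subseteq> Omega \<and> E \<in> sets borel"
  unfolding Omega_borel_def by (subst sets_restrict_space_iff) auto

lemma space_Sph_borel[simp]: "space Sph_borel = Sph"
  by (simp add: Sph_borel_def space_restrict_space)

lemma sets_Sph_borel_iff: "S \<in> sets Sph_borel \<longleftrightarrow> S \<subseteq> Sph \<and> S \<in> sets borel"
  unfolding Sph_borel_def by (subst sets_restrict_space_iff) auto

lemma wt_meas[measurable]: "wt \<alpha> \<in> borel_measurable borel"
  unfolding wt_def by measurable

lemma Tf_meas[measurable]: "(Tf :: ('a::euclidean_space \<times> 'a) \<Rightarrow> _) \<in> borel_measurable borel"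
  unfolding Tf_def borel_prod[symmetric] by measurable

lemma Tm_meas: "(Tm :: ('a::euclidean_space \<times> 'a) \<Rightarrow> _) \<in> measurable Omega_borel Omega_borel"
proof -
  have "(Tm :: ('a \<times> 'a) \<Rightarrow> _) \<in> borel_measurable borel"
    unfolding Tm_def by measurable
  moreover have "Tm x \<in> Omega" for x :: "'a \<times> 'a"
    using s0_Sph by (auto simp: Tm_def Tf_def Omega_def norm_divide)
  ultimately show ?thesis unfolding Omega_borel_def
    by (intro measurable_restrict_space1 measurable_restrict_space2) auto
qed

lemma Nm_meas: "(Nm :: ('a::euclidean_space \<times> 'a) \<Rightarrow> _) \<in> measurable Omega_borel Sph_borel"
proof -
  have "(Nm :: ('a \<times> 'a) \<Rightarrow> _) \<in> borel_measurable borel"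
    unfolding Nm_def by measurable
  moreover have "Nm x \<in> Sph" for x :: "'a \<times> 'a"
    using s0_Sph by (auto simp: Nm_def)
  ultimately show ?thesis unfolding Omega_borel_def Sph_borel_def
    by (intro measurable_restrict_space1 measurable_restrict_space2) auto
qed

lemma fst_meas: "(fst :: ('a::euclidean_space \<times> 'a) \<Rightarrow> _) \<in> measurable Omega_borel Sph_borel"
  unfolding Omega_borel_def Sph_borel_def
  by (intro measurable_restrict_space2 measurable_restrict_space1) (auto simp: Omega_def space_restrict_space)

lemma emb0_meas: "(\<lambda>s. (s, 0::'a)) \<in> measurable Sph_borel (Omega_borel :: ('a::euclidean_space \<times> 'a) measure)"
  unfolding Omega_borel_def Sph_borel_def
  by (intro measurable_restrict_space1 measurable_restrict_space2) (auto simp: Omega_def borel_prod[symmetric])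

lemma borel_to_Omega: "f \<in> borel_measurable borel \<Longrightarrow> f \<in> borel_measurable Omega_borel"
  unfolding Omega_borel_def by (rule measurable_restrict_space1)

lemma Times_borel: "S \<in> sets borel \<Longrightarrow> T \<in> sets borel \<Longrightarrow>
   S \<times> T \<in> sets (borel :: ('a::euclidean_space \<times> 'b::euclidean_space) measure)"
  unfolding borel_prod[symmetric] by (rule pair_measureI)

lemma Tf_props:
  fixes x :: "'a::euclidean_space \<times> 'a"
  assumes "fst x \<in> Sph" "snd x \<noteq> 0"
  shows "snd (Tf x) \<noteq> 0" "fst (Tf x) \<in> Sph" "Tf x \<in> Omega_nz" "Tf (Tf x) = x"
    "norm (snd (Tf x)) = inverse (norm (snd x))"
    "snd (Tf x) /\<^sub>R norm (snd (Tf x)) = fst x"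
    "wt \<alpha> (Tf x) * wt \<alpha> x = 1"
proof -
  obtain a b where x: "x = (a, b)" by (cases x)
  have a: "norm a = 1" and b: "b \<noteq> 0" using assms by (auto simp: x)
  have nb: "norm b > 0" using b by simp
  show 1: "snd (Tf x) \<noteq> 0" using a b by (auto simp: Tf_def x)
  show "fst (Tf x) \<in> Sph" using b by (simp add: Tf_def x)
  then show "Tf x \<in> Omega_nz" using 1 by (simp add: Omega_nz_def mem_Times_iff)
  show n: "norm (snd (Tf x)) = inverse (norm (snd x))" using a nb by (simp add: Tf_def x field_simps)
  show "Tf (Tf x) = x" using a nb by (simp add: Tf_def x field_simps)
  show "snd (Tf x) /\<^sub>R norm (snd (Tf x)) = fst x" using a nb by (simp add: Tf_def x field_simps)
  have e: "inverse (norm b) powr \<alpha> * norm b powr \<alpha> = 1"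
    by (subst powr_mult[symmetric]) (use nb in auto)
  have "wt \<alpha> (Tf x) * wt \<alpha> x = ennreal (inverse (norm b) powr \<alpha>) * ennreal (norm b powr \<alpha>)"
    using 1 n b by (simp add: wt_def x)
  also have "\<dots> = ennreal (inverse (norm b) powr \<alpha> * norm b powr \<alpha>)"
    by (simp add: ennreal_mult[symmetric])
  also have "\<dots> = 1" using e by simp
  finally show "wt \<alpha> (Tf x) * wt \<alpha> x = 1" .
qed




locale adjl =
  fixes \<alpha> :: real and P :: "('a::euclidean_space \<times> 'a) measure"
  assumes PM: "P \<in> M_alpha \<alpha>"
begin

lemma prob: "prob_space P" and setsP: "sets P = sets Omega_borel"
  using PM by (auto simp: M_alpha_def)

sublocale prob_space P by (rule prob)

lemma spaceP[simp]: "space P = Omega"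
  using sets_eq_imp_space_eq[OF setsP] by simp

lemma measP: "f \<in> borel_measurable borel \<Longrightarrow> f \<in> borel_measurable P"
  using borel_to_Omega measurable_cong_sets[OF setsP refl] by blast

lemma measP': "f \<in> measurable Omega_borel N \<Longrightarrow> f \<in> measurable P N"
  using measurable_cong_sets[OF setsP refl] by blast

lemma condM: "S \<in> sets borel \<Longrightarrow> S \<subseteq> Sph \<Longrightarrow>
   (\<integral>\<^sup>+ x. indicator S (snd x /\<^sub>R norm (snd x)) * wt \<alpha> x \<partial>P) \<le> emeasure P (S \<times> UNIV)"
  using PM by (auto simp: M_alpha_def)

lemma int_wt: "(\<integral>\<^sup>+ x. wt \<alpha> x \<partial>P) \<le> 1"
proof -
  have "(\<integral>\<^sup>+ x. wt \<alpha> x \<partial>P) = (\<integral>\<^sup>+ x. indicator Sph (snd x /\<^sub>R norm (snd x)) * wt \<alpha> x \<partial>P)"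
    by (intro nn_integral_cong) (auto simp: wt_def indicator_def field_simps)
  also have "\<dots> \<le> emeasure P (Sph \<times> UNIV)" by (rule condM) auto
  also have "\<dots> \<le> 1" by (rule emeasure_le_1)
  finally show ?thesis .
qed

lemma int_wt_fin: "(\<integral>\<^sup>+ x. wt \<alpha> x \<partial>P) < \<infinity>"
  using int_wt by (simp add: order_le_less_trans top.not_eq_extremum)

lemma ind_wt_fin: "(\<integral>\<^sup>+ x. indicator A (F x) * wt \<alpha> x \<partial>P) < \<infinity>"
proof -
  have "(\<integral>\<^sup>+ x. indicator A (F x) * wt \<alpha> x \<partial>P) \<le> (\<integral>\<^sup>+ x. wt \<alpha> x \<partial>P)"
    by (intro nn_integral_mono) (auto simp: indicator_def)
  then show ?thesis using int_wt_fin by (simp add: order_le_less_trans)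
qed

definition "M1 = distr P Sph_borel fst"
definition "M2 = distr (density P (wt \<alpha>)) Sph_borel Nm"
definition "Q0 = distr (diff_measure M1 M2) Omega_borel (\<lambda>s. (s, 0))"
definition "Q1 = distr (density P (wt \<alpha>)) Omega_borel Tm"
definition "Qa = addm Q0 Q1"

lemma wtP[measurable]: "wt \<alpha> \<in> borel_measurable P" by (rule measP) simp

lemma sets_M1: "sets M1 = sets Sph_borel" and sets_M2: "sets M2 = sets Sph_borel"
  and sets_Q0: "sets Q0 = sets Omega_borel" and sets_Q1: "sets Q1 = sets Omega_borel"
  and space_Q0: "space Q0 = Omega" and sets_Qa: "sets Qa = sets Omega_borel"
  and space_Qa: "space Qa = Omega" and space_M1: "space M1 = Sph"
  by (auto simp: M1_def M2_def Q0_def Q1_def Qa_def)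

lemma emeasure_M1: "S \<in> sets Sph_borel \<Longrightarrow> emeasure M1 S = emeasure P (S \<times> UNIV)"
  unfolding M1_def
  apply (subst emeasure_distr[OF measP'[OF fst_meas]], assumption)
  apply (rule arg_cong[where f="emeasure P"])
  apply (auto simp: sets_Sph_borel_iff Omega_def)
  done

lemma emeasure_M2: "S \<in> sets Sph_borel \<Longrightarrow>
   emeasure M2 S = (\<integral>\<^sup>+ x. indicator S (snd x /\<^sub>R norm (snd x)) * wt \<alpha> x \<partial>P)"
proof -
  assume S: "S \<in> sets Sph_borel"
  have Nm': "Nm \<in> measurable (density P (wt \<alpha>)) Sph_borel"
    using measP'[OF Nm_meas] by (simp cong: measurable_cong_sets)
  have "emeasure M2 S = emeasure (density P (wt \<alpha>)) (Nm -` S \<inter> Omega)"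
    unfolding M2_def by (subst emeasure_distr[OF Nm' S]) simp
  also have "\<dots> = (\<integral>\<^sup>+ x. wt \<alpha> x * indicator (Nm -` S \<inter> Omega) x \<partial>P)"
    by (rule emeasure_density) (use measurable_sets[OF measP'[OF Nm_meas] S] in auto)
  also have "\<dots> = (\<integral>\<^sup>+ x. indicator S (snd x /\<^sub>R norm (snd x)) * wt \<alpha> x \<partial>P)"
    by (intro nn_integral_cong) (auto simp: wt_def Nm_def indicator_def)
  finally show ?thesis .
qed

lemma emeasure_Q1: "E \<in> sets Omega_borel \<Longrightarrow>
   emeasure Q1 E = (\<integral>\<^sup>+ x. indicator E (Tf x) * wt \<alpha> x \<partial>P)"
proof -
  assume E: "E \<in> sets Omega_borel"
  have Tm': "Tm \<in> measurable (density P (wt \<alpha>)) Omega_borel"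
    using measP'[OF Tm_meas] by (simp cong: measurable_cong_sets)
  have "emeasure Q1 E = emeasure (density P (wt \<alpha>)) (Tm -` E \<inter> Omega)"
    unfolding Q1_def by (subst emeasure_distr[OF Tm' E]) simp
  also have "\<dots> = (\<integral>\<^sup>+ x. wt \<alpha> x * indicator (Tm -` E \<inter> Omega) x \<partial>P)"
    by (rule emeasure_density) (use measurable_sets[OF measP'[OF Tm_meas] E] in auto)
  also have "\<dots> = (\<integral>\<^sup>+ x. indicator E (Tf x) * wt \<alpha> x \<partial>P)"
    by (intro nn_integral_cong) (auto simp: wt_def Tm_def indicator_def)
  finally show ?thesis .
qed

lemma fin_M1: "finite_measure M1"
proof -
  have "prob_space M1" unfolding M1_def by (intro prob_space_distr measP' fst_meas)
  then show ?thesis by (simp add: prob_space_def)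
qed

lemma fin_M2: "finite_measure M2"
proof (rule finite_measureI)
  have "emeasure M2 (space M2) = (\<integral>\<^sup>+ x. indicator Sph (snd x /\<^sub>R norm (snd x)) * wt \<alpha> x \<partial>P)"
    by (subst emeasure_M2) (auto simp: M2_def sets_Sph_borel_iff)
  then show "emeasure M2 (space M2) \<noteq> \<infinity>" using ind_wt_fin[of Sph "\<lambda>x. snd x /\<^sub>R norm (snd x)"] by simp
qed

lemma M2_le_M1: "A \<in> sets M1 \<Longrightarrow> emeasure M2 A \<le> emeasure M1 A"
  using condM by (auto simp: sets_M1 emeasure_M1 emeasure_M2 sets_Sph_borel_iff)

lemma emeasure_Q0: "E \<in> sets Omega_borel \<Longrightarrow>
   emeasure Q0 E = emeasure M1 {s. s \<in> Sph \<and> (s, 0) \<in> E} - emeasure M2 {s. s \<in> Sph \<and> (s, 0) \<in> E}"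
proof -
  assume E: "E \<in> sets Omega_borel"
  have m: "(\<lambda>s. (s, 0::'a)) \<in> measurable (diff_measure M1 M2) Omega_borel"
    using emb0_meas by (simp add: sets_M1 cong: measurable_cong_sets)
  have eq: "(\<lambda>s. (s, 0::'a)) -` E \<inter> space (diff_measure M1 M2) = {s. s \<in> Sph \<and> (s, 0) \<in> E}"
    by (auto simp: space_M1)
  have S: "{s. s \<in> Sph \<and> (s, 0) \<in> E} \<in> sets M1"
    using measurable_sets[OF m E] eq by simp
  show ?thesis unfolding Q0_def
    apply (subst emeasure_distr[OF m E])
    apply (subst eq)
    apply (rule emeasure_diff_measure[OF fin_M1 fin_M2])
    using S M2_le_M1 by (auto simp: sets_M1 sets_M2)
qed

end



context adjl begin

lemma emeasure_Qa_raw: "E \<in> sets Omega_borel \<Longrightarrow> emeasure Qa E =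
  (emeasure P ({s. s \<in> Sph \<and> (s, 0) \<in> E} \<times> UNIV)
     - (\<integral>\<^sup>+ x. indicator {s. s \<in> Sph \<and> (s, 0) \<in> E} (snd x /\<^sub>R norm (snd x)) * wt \<alpha> x \<partial>P))
  + (\<integral>\<^sup>+ x. indicator E (Tf x) * wt \<alpha> x \<partial>P)"
proof -
  assume E: "E \<in> sets Omega_borel"
  have m: "(\<lambda>s. (s, 0::'a)) \<in> measurable Sph_borel Omega_borel" by (rule emb0_meas)
  have S: "{s. s \<in> Sph \<and> (s, 0) \<in> E} \<in> sets Sph_borel"
  proof -
    have "(\<lambda>s. (s, 0::'a)) -` E \<inter> space Sph_borel = {s. s \<in> Sph \<and> (s, 0) \<in> E}" by auto
    then show ?thesis using measurable_sets[OF m E] by simp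
  qed
  show ?thesis
    unfolding Qa_def
    by (subst emeasure_addm) (use E S in \<open>auto simp: sets_Q0 sets_Q1 emeasure_Q0 emeasure_Q1 emeasure_M1 emeasure_M2\<close>)
qed

lemma adj_nonneg_aux: "E \<in> sets Omega_borel \<Longrightarrow>
  enn2real (\<integral>\<^sup>+ x. indicator {s. s \<in> Sph \<and> (s, 0) \<in> E} (snd x /\<^sub>R norm (snd x)) * wt \<alpha> x \<partial>P)
   \<le> measure P ({s. s \<in> Sph \<and> (s, 0) \<in> E} \<times> UNIV)"
proof -
  assume E: "E \<in> sets Omega_borel"
  let ?S = "{s. s \<in> Sph \<and> (s, 0) \<in> E}"
  have S: "?S \<in> sets Sph_borel"
  proof -
    have "(\<lambda>s. (s, 0::'a)) -` E \<inter> space Sph_borel = ?S" by auto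
    then show ?thesis using measurable_sets[OF emb0_meas E] by simp
  qed
  have "(\<integral>\<^sup>+ x. indicator ?S (snd x /\<^sub>R norm (snd x)) * wt \<alpha> x \<partial>P) \<le> emeasure P (?S \<times> UNIV)"
    using S by (intro condM) (auto simp: sets_Sph_borel_iff)
  then show ?thesis
    by (simp add: emeasure_eq_measure enn2real_leI)
qed

lemma emeasure_Qa: "E \<in> sets Omega_borel \<Longrightarrow> emeasure Qa E = ennreal (adjoint_fun \<alpha> P E)"
proof -
  assume E: "E \<in> sets Omega_borel"
  let ?S = "{s. s \<in> Sph \<and> (s, 0) \<in> E}"
  let ?I0 = "(\<integral>\<^sup>+ x. indicator ?S (snd x /\<^sub>R norm (snd x)) * wt \<alpha> x \<partial>P)"
  let ?I1 = "(\<integral>\<^sup>+ x. indicator E (Tf x) * wt \<alpha> x \<partial>P)"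
  have I0: "?I0 = ennreal (enn2real ?I0)" by (rule ennreal_enn2real[symmetric]) (use ind_wt_fin[of ?S "\<lambda>x. snd x /\<^sub>R norm (snd x)"] in simp)
  have I1: "?I1 = ennreal (enn2real ?I1)" by (rule ennreal_enn2real[symmetric]) (use ind_wt_fin[of E Tf] in simp)
  have le: "enn2real ?I0 \<le> measure P (?S \<times> UNIV)" using adj_nonneg_aux[OF E] .
  have "emeasure Qa E = (ennreal (measure P (?S \<times> UNIV)) - ennreal (enn2real ?I0)) + ennreal (enn2real ?I1)"
    using emeasure_Qa_raw[OF E] I0 I1 by (simp add: emeasure_eq_measure)
  also have "\<dots> = ennreal (measure P (?S \<times> UNIV) - enn2real ?I0 + enn2real ?I1)"
    using le by (simp add: ennreal_minus ennreal_plus[symmetric] del: ennreal_plus)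
  also have "\<dots> = ennreal (adjoint_fun \<alpha> P E)"
    by (simp add: adjoint_fun_def Let_def Tf_def)
  finally show ?thesis .
qed

lemma adjoint_eq: "adjoint \<alpha> P = Qa"
proof -
  have "adjoint \<alpha> P = measure_of Omega (sets Omega_borel) (emeasure Qa)"
    unfolding adjoint_def
  proof (rule measure_of_eq)
    show "sets Omega_borel \<subseteq> Pow Omega" using sets.space_closed[of Omega_borel] by simp
    fix a :: "('a \<times> 'a) set" assume "a \<in> sigma_sets Omega (sets Omega_borel)"
    then have "a \<in> sets Omega_borel" using sets.sigma_sets_eq[of Omega_borel] space_Omega_borel by metis
    then show "ennreal (adjoint_fun \<alpha> P a) = emeasure Qa a" by (simp add: emeasure_Qa)
  qed
  also have "\<dots> = Qa"
    using measure_of_of_measure[of Qa] by (simp add: space_Qa sets_Qa)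
  finally show ?thesis .
qed

lemma transfer:
  assumes h: "h \<in> borel_measurable Omega_borel" and h0: "\<And>s. s \<in> Sph \<Longrightarrow> h (s, 0) = 0"
  shows "(\<integral>\<^sup>+ x. h x \<partial>Qa) = (\<integral>\<^sup>+ x. h (Tf x) * wt \<alpha> x \<partial>P)"
proof -
  have hQ0: "h \<in> borel_measurable Q0" using h by (simp add: sets_Q0 cong: measurable_cong_sets)
  have "(\<integral>\<^sup>+ x. h x \<partial>Qa) = (\<integral>\<^sup>+ x. h x \<partial>Q0) + (\<integral>\<^sup>+ x. h x \<partial>Q1)"
    unfolding Qa_def by (rule nn_integral_addm) (auto simp: sets_Q0 sets_Q1 hQ0)
  also have "(\<integral>\<^sup>+ x. h x \<partial>Q0) = 0"
  proof -
    have m: "(\<lambda>s. (s, 0::'a)) \<in> measurable (diff_measure M1 M2) Omega_borel"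
      using emb0_meas by (simp add: sets_M1 cong: measurable_cong_sets)
    have "(\<integral>\<^sup>+ x. h x \<partial>Q0) = (\<integral>\<^sup>+ s. h (s, 0) \<partial>diff_measure M1 M2)"
      unfolding Q0_def by (rule nn_integral_distr[OF m]) (use h in simp)
    also have "\<dots> = (\<integral>\<^sup>+ s. 0 \<partial>diff_measure M1 M2)"
      by (intro nn_integral_cong) (auto simp: space_M1 h0)
    finally show ?thesis by simp
  qed
  also have "(\<integral>\<^sup>+ x. h x \<partial>Q1) = (\<integral>\<^sup>+ x. h (Tm x) \<partial>density P (wt \<alpha>))"
  proof -
    have Tm': "Tm \<in> measurable (density P (wt \<alpha>)) Omega_borel"
      using measP'[OF Tm_meas] by (simp cong: measurable_cong_sets)
    show ?thesis unfolding Q1_def by (rule nn_integral_distr[OF Tm']) (use h in simp)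
  qed
  also have "\<dots> = (\<integral>\<^sup>+ x. wt \<alpha> x * h (Tm x) \<partial>P)"
    by (rule nn_integral_density) (use measP'[OF measurable_comp[OF Tm_meas h]] in \<open>auto simp: comp_def\<close>)
  also have "\<dots> = (\<integral>\<^sup>+ x. h (Tf x) * wt \<alpha> x \<partial>P)"
    by (intro nn_integral_cong) (auto simp: wt_def Tm_def mult.commute)
  finally show ?thesis by simp
qed

end



context adjl begin

lemma adj_nonneg: "E \<in> sets Omega_borel \<Longrightarrow> adjoint_fun \<alpha> P E \<ge> 0"
  using adj_nonneg_aux[of E] by (simp add: adjoint_fun_def Let_def)

lemma measure_Qa: "E \<in> sets Omega_borel \<Longrightarrow> measure Qa E = adjoint_fun \<alpha> P E"
  using adj_nonneg[of E] by (simp add: measure_def emeasure_Qa)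

lemma marg: "S \<in> sets Sph_borel \<Longrightarrow> emeasure Qa (S \<times> UNIV) = emeasure P (S \<times> UNIV)"
proof -
  assume S: "S \<in> sets Sph_borel"
  then have SS: "S \<subseteq> Sph" "S \<in> sets borel" by (auto simp: sets_Sph_borel_iff)
  have E: "S \<times> UNIV \<in> sets Omega_borel"
    using SS by (auto simp: sets_Omega_borel_iff Omega_def intro!: Times_borel)
  have eqS: "{s. s \<in> Sph \<and> (s, 0) \<in> S \<times> UNIV} = S" using SS by auto
  have eqI: "(\<integral>\<^sup>+ x. indicator (S \<times> UNIV) (Tf x) * wt \<alpha> x \<partial>P)
     = (\<integral>\<^sup>+ x. indicator S (snd x /\<^sub>R norm (snd x)) * wt \<alpha> x \<partial>P)"
    by (intro nn_integral_cong) (simp add: Tf_def indicator_def)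
  have le: "(\<integral>\<^sup>+ x. indicator S (snd x /\<^sub>R norm (snd x)) * wt \<alpha> x \<partial>P) \<le> emeasure P (S \<times> UNIV)"
    using SS by (intro condM)
  show ?thesis
    using emeasure_Qa_raw[OF E] unfolding eqS eqI using le by (simp add: diff_add_cancel_ennreal)
qed

lemma prob_Qa: "prob_space Qa"
proof (rule prob_spaceI)
  have "Sph \<in> sets Sph_borel" by (simp add: sets_Sph_borel_iff)
  then have "emeasure Qa (Sph \<times> UNIV) = emeasure P (Sph \<times> UNIV)" by (rule marg)
  also have "\<dots> = 1" using emeasure_space_1 by (simp add: Omega_def)
  finally show "emeasure Qa (space Qa) = 1" by (simp add: space_Qa Omega_def)
qed

lemma distr_eq: "distr P Sph_borel fst = distr Qa Sph_borel fst"
proof (rule measure_eqI)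
  show "sets (distr P Sph_borel fst) = sets (distr Qa Sph_borel fst)" by simp
  fix S assume "S \<in> sets (distr P Sph_borel fst)"
  then have S: "S \<in> sets Sph_borel" by simp
  then have SS: "S \<subseteq> Sph" by (auto simp: sets_Sph_borel_iff)
  have mP: "fst \<in> measurable P Sph_borel" by (rule measP'[OF fst_meas])
  have mQ: "fst \<in> measurable Qa Sph_borel"
    using fst_meas by (simp add: sets_Qa cong: measurable_cong_sets)
  have eq: "fst -` S \<inter> Omega = S \<times> UNIV" using SS by (auto simp: Omega_def)
  show "emeasure (distr P Sph_borel fst) S = emeasure (distr Qa Sph_borel fst) S"
    using marg[OF S] by (simp add: emeasure_distr[OF mP S] emeasure_distr[OF mQ S] space_Qa eq)
qed

lemma I0_Qa: "S \<in> sets borel \<Longrightarrow> S \<subseteq> Sph \<Longrightarrow>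
  (\<integral>\<^sup>+ x. indicator S (snd x /\<^sub>R norm (snd x)) * wt \<alpha> x \<partial>Qa) = emeasure P (S \<times> (UNIV - {0}))"
proof -
  assume S: "S \<in> sets borel" "S \<subseteq> Sph"
  have h: "(\<lambda>x. indicator S (snd x /\<^sub>R norm (snd x)) * wt \<alpha> x) \<in> borel_measurable Omega_borel"
    by (rule borel_to_Omega) (use S in measurable)
  have "(\<integral>\<^sup>+ x. indicator S (snd x /\<^sub>R norm (snd x)) * wt \<alpha> x \<partial>Qa)
     = (\<integral>\<^sup>+ x. indicator S (snd (Tf x) /\<^sub>R norm (snd (Tf x))) * wt \<alpha> (Tf x) * wt \<alpha> x \<partial>P)"
    by (rule transfer[OF h]) (simp add: wt_def)
  also have "\<dots> = (\<integral>\<^sup>+ x. indicator (S \<times> (UNIV - {0})) x \<partial>P)"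
  proof (intro nn_integral_cong)
    fix x assume "x \<in> space P"
    then have x: "fst x \<in> Sph" by (auto simp: Omega_def mem_Times_iff)
    show "indicator S (snd (Tf x) /\<^sub>R norm (snd (Tf x))) * wt \<alpha> (Tf x) * wt \<alpha> x = indicator (S \<times> (UNIV - {0})) x"
    proof (cases "snd x = 0")
      case True then show ?thesis by (simp add: wt_def indicator_def mem_Times_iff)
    next
      case False
      then show ?thesis using Tf_props[OF x False]
        by (simp add: mult.assoc indicator_def mem_Times_iff)
    qed
  qed
  also have "\<dots> = emeasure P (S \<times> (UNIV - {0}))"
    by (rule nn_integral_indicator)
       (use S in \<open>auto simp: setsP sets_Omega_borel_iff Omega_def intro!: Times_borel\<close>)
  finally show ?thesis .
qed

lemma Qa_M_alpha: "Qa \<in> M_alpha \<alpha>"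
  unfolding M_alpha_def
proof (intro CollectI conjI allI impI)
  show "prob_space Qa" by (rule prob_Qa)
  show "sets Qa = sets Omega_borel" by (rule sets_Qa)
  fix S :: "'a set" assume S: "S \<in> sets borel" "S \<subseteq> Sph"
  have "(\<integral>\<^sup>+ x. indicator S (snd x /\<^sub>R norm (snd x)) * wt \<alpha> x \<partial>Qa) = emeasure P (S \<times> (UNIV - {0}))"
    by (rule I0_Qa[OF S])
  also have "\<dots> \<le> emeasure P (S \<times> UNIV)"
    by (rule emeasure_mono) (use S in \<open>auto simp: setsP sets_Omega_borel_iff Omega_def intro!: Times_borel\<close>)
  also have "\<dots> = emeasure Qa (S \<times> UNIV)"
    by (rule marg[symmetric]) (use S in \<open>simp add: sets_Sph_borel_iff\<close>)
  finally show "(\<integral>\<^sup>+ x. indicator S (snd x /\<^sub>R norm (snd x)) * wt \<alpha> x \<partial>Qa) \<le> emeasure Qa (S \<times> UNIV)" .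
qed

end



lemma ind_ennreal: "ennreal (indicator A x *\<^sub>R f x) = indicator A x * ennreal (f x)"
  by (simp add: indicator_def)

lemma ind_ennreal_neg: "ennreal (- (indicator A x *\<^sub>R f x)) = indicator A x * ennreal (- f x)"
  by (simp add: indicator_def)

lemma ind_ennreal2: "ennreal (indicator A x * (f x::real)) = indicator A x * ennreal (f x)"
  by (simp add: indicator_def)

lemma ind_ennreal_neg2: "ennreal (- (indicator A x * (f x::real))) = indicator A x * ennreal (- f x)"
  by (simp add: indicator_def)

lemma fb_of: "(f :: _ \<Rightarrow> real)  \<in> borel_measurable (restrict_space borel Omega_nz) \<Longrightarrow>
  (\<lambda>x. indicator Omega_nz x *\<^sub>R f x) \<in> borel_measurable (borel :: ('a::euclidean_space \<times> 'a) measure)"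
  using borel_measurable_restrict_space_iff[of Omega_nz borel f] by simp

lemma gb_of:
  fixes G :: "'a::euclidean_space \<times> 'a \<Rightarrow> real"
  assumes [measurable]: "G \<in> borel_measurable borel"
  shows "(\<lambda>x. indicator Omega_nz x * (G (Tf x) * norm (snd x) powr \<alpha>)) \<in> borel_measurable borel"
  by measurable

context adjl begin

lemma nn_part:
  fixes f :: "'a \<times> 'a \<Rightarrow> real"
  assumes fb: "(\<lambda>x. indicator Omega_nz x *\<^sub>R f x) \<in> borel_measurable borel"
  shows "(\<integral>\<^sup>+ x. indicator Omega_nz x * ennreal (f x) \<partial>Qa)
     = (\<integral>\<^sup>+ x. indicator Omega_nz x * ennreal (f (snd x /\<^sub>R norm (snd x), fst x /\<^sub>R norm (snd x)) * norm (snd x) powr \<alpha>) \<partial>P)"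
proof -
  have h: "(\<lambda>x. ennreal (indicator Omega_nz x *\<^sub>R f x)) \<in> borel_measurable Omega_borel"
    by (rule borel_to_Omega) (use fb in measurable)
  have "(\<integral>\<^sup>+ x. indicator Omega_nz x * ennreal (f x) \<partial>Qa) = (\<integral>\<^sup>+ x. ennreal (indicator Omega_nz x *\<^sub>R f x) \<partial>Qa)"
    by (intro nn_integral_cong) (simp add: indicator_def)
  also have "\<dots> = (\<integral>\<^sup>+ x. ennreal (indicator Omega_nz (Tf x) *\<^sub>R f (Tf x)) * wt \<alpha> x \<partial>P)"
    by (rule transfer[OF h]) (simp add: Omega_nz_def)
  also have "\<dots> = (\<integral>\<^sup>+ x. indicator Omega_nz x * ennreal (f (snd x /\<^sub>R norm (snd x), fst x /\<^sub>R norm (snd x)) * norm (snd x) powr \<alpha>) \<partial>P)"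
  proof (intro nn_integral_cong)
    fix x assume "x \<in> space P"
    then have x: "fst x \<in> Sph" by (auto simp: Omega_def mem_Times_iff)
    show "ennreal (indicator Omega_nz (Tf x) *\<^sub>R f (Tf x)) * wt \<alpha> x =
      indicator Omega_nz x * ennreal (f (snd x /\<^sub>R norm (snd x), fst x /\<^sub>R norm (snd x)) * norm (snd x) powr \<alpha>)"
    proof (cases "snd x = 0")
      case True then show ?thesis by (simp add: wt_def Omega_nz_def mem_Times_iff)
    next
      case False
      have "x \<in> Omega_nz" using x False by (auto simp: Omega_nz_def mem_Times_iff)
      then show ?thesis using Tf_props(3)[OF x False] False
        by (simp add: wt_def ennreal_mult'' Tf_def)
    qed
  qed
  finally show ?thesis .
qed

lemma part2:
  fixes f :: "'a \<times> 'a \<Rightarrow> real"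
  assumes f: "f \<in> borel_measurable (restrict_space borel Omega_nz)"
  defines "g \<equiv> (\<lambda>x. f (snd x /\<^sub>R norm (snd x), fst x /\<^sub>R norm (snd x)) * norm (snd x) powr \<alpha>)"
  shows "(\<integral>\<^sup>+ x. indicator Omega_nz x * ennreal (f x) \<partial>Qa)
             = (\<integral>\<^sup>+ x. indicator Omega_nz x * ennreal (g x) \<partial>P)
          \<and> (\<integral>\<^sup>+ x. indicator Omega_nz x * ennreal (- f x) \<partial>Qa)
             = (\<integral>\<^sup>+ x. indicator Omega_nz x * ennreal (- g x) \<partial>P)
          \<and> (set_integrable Qa Omega_nz f \<longleftrightarrow> set_integrable P Omega_nz g)
          \<and> (set_integrable P Omega_nz g \<longrightarrow>
               (LINT x:Omega_nz|Qa. f x) = (LINT x:Omega_nz|P. g x))"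
proof -
  have fb: "(\<lambda>x. indicator Omega_nz x *\<^sub>R f x) \<in> borel_measurable borel" by (rule fb_of[OF f])
  have fb': "(\<lambda>x. indicator Omega_nz x *\<^sub>R (- f x)) \<in> borel_measurable borel"
    using borel_measurable_uminus[OF fb] by simp
  have e1: "(\<integral>\<^sup>+ x. indicator Omega_nz x * ennreal (f x) \<partial>Qa) = (\<integral>\<^sup>+ x. indicator Omega_nz x * ennreal (g x) \<partial>P)"
    unfolding g_def by (rule nn_part[OF fb])
  have e2: "(\<integral>\<^sup>+ x. indicator Omega_nz x * ennreal (- f x) \<partial>Qa) = (\<integral>\<^sup>+ x. indicator Omega_nz x * ennreal (- g x) \<partial>P)"
    unfolding g_def using nn_part[OF fb'] by simp
  have mQ: "(\<lambda>x. indicator Omega_nz x *\<^sub>R f x) \<in> borel_measurable Qa"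
    using borel_to_Omega[OF fb] by (simp add: sets_Qa cong: measurable_cong_sets)
  have mP: "(\<lambda>x. indicator Omega_nz x *\<^sub>R g x) \<in> borel_measurable P"
  proof -
    have "(\<lambda>x. indicator Omega_nz x *\<^sub>R g x) =
      (\<lambda>x. indicator Omega_nz x * ((\<lambda>y. indicator Omega_nz y *\<^sub>R f y) (Tf x) * norm (snd x) powr \<alpha>))"
    proof
      fix x :: "'a \<times> 'a"
      show "indicator Omega_nz x *\<^sub>R g x =
        indicator Omega_nz x * ((\<lambda>y. indicator Omega_nz y *\<^sub>R f y) (Tf x) * norm (snd x) powr \<alpha>)"
      proof (cases "x \<in> Omega_nz")
        case True
        then have "fst x \<in> Sph" "snd x \<noteq> 0" by (auto simp: Omega_nz_def mem_Times_iff)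
        then have "Tf x \<in> Omega_nz" by (rule Tf_props(3))
        then show ?thesis using True by (simp add: g_def Tf_def)
      qed simp
    qed
    then show ?thesis using measP[OF gb_of[OF fb]] by simp
  qed
  have iff: "set_integrable Qa Omega_nz f \<longleftrightarrow> set_integrable P Omega_nz g"
    unfolding set_integrable_def real_integrable_def
    using mQ mP e1 e2 by (simp add: ind_ennreal ind_ennreal_neg ind_ennreal2 ind_ennreal_neg2 del: scaleR_minus_right)
  have int: "(LINT x:Omega_nz|Qa. f x) = (LINT x:Omega_nz|P. g x)" if gi: "set_integrable P Omega_nz g"
  proof -
    have fi: "set_integrable Qa Omega_nz f" using iff gi by simp
    show ?thesis
      using fi gi unfolding set_lebesgue_integral_def set_integrable_def
      by (simp add: real_lebesgue_integral_def ind_ennreal ind_ennreal_neg ind_ennreal2 ind_ennreal_neg2 e1 e2 del: scaleR_minus_right)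
  qed
  show ?thesis using e1 e2 iff int by blast
qed

end



context adjl begin

lemma I1_Qa: "E \<in> sets Omega_borel \<Longrightarrow>
  (\<integral>\<^sup>+ x. indicator E (Tf x) * wt \<alpha> x \<partial>Qa) = emeasure P (E \<inter> {x. snd x \<noteq> 0})"
proof -
  assume E: "E \<in> sets Omega_borel"
  then have Eb[measurable]: "E \<in> sets borel" by (simp add: sets_Omega_borel_iff)
  have h: "(\<lambda>x. indicator E (Tf x) * wt \<alpha> x) \<in> borel_measurable Omega_borel"
    by (rule borel_to_Omega) measurable
  have "(\<integral>\<^sup>+ x. indicator E (Tf x) * wt \<alpha> x \<partial>Qa)
     = (\<integral>\<^sup>+ x. indicator E (Tf (Tf x)) * wt \<alpha> (Tf x) * wt \<alpha> x \<partial>P)"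
    by (rule transfer[OF h]) (simp add: wt_def)
  also have "\<dots> = (\<integral>\<^sup>+ x. indicator (E \<inter> {x. snd x \<noteq> 0}) x \<partial>P)"
  proof (intro nn_integral_cong)
    fix x assume "x \<in> space P"
    then have x: "fst x \<in> Sph" by (auto simp: Omega_def mem_Times_iff)
    show "indicator E (Tf (Tf x)) * wt \<alpha> (Tf x) * wt \<alpha> x = indicator (E \<inter> {x. snd x \<noteq> 0}) x"
    proof (cases "snd x = 0")
      case True then show ?thesis by (simp add: wt_def indicator_def)
    next
      case False
      then show ?thesis using Tf_props[OF x False]
        by (simp add: mult.assoc indicator_def)
    qed
  qed
  also have "\<dots> = emeasure P (E \<inter> {x. snd x \<noteq> 0})"
    by (rule nn_integral_indicator) (use E in \<open>auto simp: setsP sets_Omega_borel_iff\<close>)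
  finally show ?thesis .
qed

lemma double: "adjoint \<alpha> Qa = P"
proof -
  interpret Q2: adjl \<alpha> Qa by unfold_locales (rule Qa_M_alpha)
  show ?thesis
  proof (rule measure_eqI)
    show "sets (adjoint \<alpha> Qa) = sets P" by (simp add: Q2.adjoint_eq Q2.sets_Qa setsP)
    fix E assume "E \<in> sets (adjoint \<alpha> Qa)"
    then have E: "E \<in> sets Omega_borel" by (simp add: Q2.adjoint_eq Q2.sets_Qa)
    then have Eb[measurable]: "E \<in> sets borel" and EO: "E \<subseteq> Omega" by (auto simp: sets_Omega_borel_iff)
    let ?S = "{s. s \<in> Sph \<and> (s, 0) \<in> E}"
    have S: "?S \<in> sets Sph_borel"
    proof -
      have "(\<lambda>s. (s, 0::'a)) -` E \<inter> space Sph_borel = ?S" by auto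
      then show ?thesis using measurable_sets[OF emb0_meas E] by simp
    qed
    then have Sb: "?S \<in> sets borel" "?S \<subseteq> Sph" by (auto simp: sets_Sph_borel_iff)
    have a: "measure Qa (?S \<times> UNIV) = measure P (?S \<times> UNIV)"
      using marg[OF S] by (simp add: measure_def)
    have b: "enn2real (\<integral>\<^sup>+ x. indicator ?S (snd x /\<^sub>R norm (snd x)) * wt \<alpha> x \<partial>Qa) = measure P (?S \<times> (UNIV - {0}))"
      using I0_Qa[OF Sb] by (simp add: measure_def)
    have c: "enn2real (\<integral>\<^sup>+ x. indicator E (snd x /\<^sub>R norm (snd x), fst x /\<^sub>R norm (snd x)) * wt \<alpha> x \<partial>Qa)
       = measure P (E \<inter> {x. snd x \<noteq> 0})"
      using I1_Qa[OF E] by (simp add: measure_def Tf_def)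
    have sA1: "?S \<times> {0} \<in> sets P" and sA2: "?S \<times> (UNIV - {0}) \<in> sets P"
      and sB: "E \<inter> {x. snd x \<noteq> 0} \<in> sets P"
      using Sb EO by (auto simp: setsP sets_Omega_borel_iff Omega_def intro!: Times_borel)
    have u1: "?S \<times> UNIV = ?S \<times> {0} \<union> ?S \<times> (UNIV - {0})" by auto
    have m1: "measure P (?S \<times> UNIV) = measure P (?S \<times> {0}) + measure P (?S \<times> (UNIV - {0}))"
      unfolding u1 by (rule finite_measure_Union[OF sA1 sA2]) auto
    have u2: "E = ?S \<times> {0} \<union> (E \<inter> {x. snd x \<noteq> 0})"
      using EO by (auto simp: Omega_def mem_Times_iff)
    have m2: "measure P E = measure P (?S \<times> {0}) + measure P (E \<inter> {x. snd x \<noteq> 0})"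
      by (subst u2, rule finite_measure_Union[OF sA1 sB]) auto
    have "adjoint_fun \<alpha> Qa E = measure P E"
      unfolding adjoint_fun_def Let_def a b c m1 m2 by simp
    then show "emeasure (adjoint \<alpha> Qa) E = emeasure P E"
      using Q2.emeasure_Qa[OF E] by (simp add: Q2.adjoint_eq emeasure_eq_measure)
  qed
qed

end

theorem lemma4p3:
  fixes \<alpha> :: real and P :: "('a::euclidean_space \<times> 'a) measure"
  assumes "\<alpha> > 0" and "P \<in> M_alpha \<alpha>"
  shows "prob_space (adjoint \<alpha> P)
    \<and> sets (adjoint \<alpha> P) = sets Omega_borel
    \<and> (\<forall>E \<in> sets Omega_borel. measure (adjoint \<alpha> P) E = adjoint_fun \<alpha> P E)
    \<and> distr P Sph_borel fst = distr (adjoint \<alpha> P) Sph_borel fst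
    \<and> (\<forall>f :: 'a \<times> 'a \<Rightarrow> real. f \<in> borel_measurable (restrict_space borel Omega_nz) \<longrightarrow>
         (let g = (\<lambda>x. f (snd x /\<^sub>R norm (snd x), fst x /\<^sub>R norm (snd x)) * norm (snd x) powr \<alpha>) in
          (\<integral>\<^sup>+ x. indicator Omega_nz x * ennreal (f x) \<partial>adjoint \<alpha> P)
             = (\<integral>\<^sup>+ x. indicator Omega_nz x * ennreal (g x) \<partial>P)
          \<and> (\<integral>\<^sup>+ x. indicator Omega_nz x * ennreal (- f x) \<partial>adjoint \<alpha> P)
             = (\<integral>\<^sup>+ x. indicator Omega_nz x * ennreal (- g x) \<partial>P)
          \<and> (set_integrable (adjoint \<alpha> P) Omega_nz f \<longleftrightarrow> set_integrable P Omega_nz g)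
          \<and> (set_integrable P Omega_nz g \<longrightarrow>
               (LINT x:Omega_nz|adjoint \<alpha> P. f x) = (LINT x:Omega_nz|P. g x))))
    \<and> adjoint \<alpha> P \<in> M_alpha \<alpha>
    \<and> adjoint \<alpha> (adjoint \<alpha> P) = P"
proof -
  interpret adjl \<alpha> P by unfold_locales (rule assms(2))
  show ?thesis
    unfolding adjoint_eq Let_def
    using prob_Qa sets_Qa measure_Qa distr_eq part2 Qa_M_alpha double by blast
qed



end
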